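(* Let $(\mathcal X,d)$ be a distance space, $k$ a positive integer, and suppose $\mathcal X$ has a nice $k$-clustering $\mathcal C=\{C_1,\ldots,C_k\}$. Let $x_1,x_2,\ldots$ be any sequence of distinct points of $\mathcal X$, processed by the incremental algorithm with extra centers (parameter $k$). Then for each $t$, the set $T_t$ has at most $2^{k-1}$ points and contains at least one point of $C_i$ for every $i$ with $C_i\cap\{x_1,\ldots,x_t\}\neq\emptyset$.
   Context: A distance space $(\mathcal X,d)$ is a set with a symmetric function $d:\mathcal X\times\mathcal X\to\mathbb R_{\ge0}$ with $d(x,x)=0$. A clustering of $\mathcal X$ is a set of nonempty, pairwise disjoint subsets whose union is $\mathcal X$; a $k$-clustering has exactly $k$ clusters. Write $x\sim_{\mathcal C}y$ if $x,y$ are in the same cluster and $x\not\sim_{\mathcal C}y$ otherwise. $\mathcal C$ is nice if for all $x,y,z\in\mathcal X$: $d(y,x)<d(z,x)$ whenever $x\sim_{\mathcal C}y$ and $x\not\sim_{\mathcal C}z$. Single linkage on a finite $S$ builds a rooted binary tree: start with one leaf per point of $S$; repeatedly pick two current clusters $A,B$ minimizing $\min_{a\in A,b\in B}d(a,b)$ (any tie-breaking) and make them children of a new node representing $A\cup B$, until one cluster remains (the root). $\textsc{Candidates}(S)$ with parameter $k$: run single linkage on $S$; assign each leaf its point; bottom-up, assign each internal node the point of one of its children; return all points assigned to nodes at depth $<k$ (root at depth $0$). Incremental algorithm with extra centers (parameter $k$): $T_0=\emptyset$; for $t=1,2,\ldots$: receive $x_t$, set $T_t=T_{t-1}\cup\{x_t\}$,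 and if $|T_t|>2^{k-1}$ replace $T_t$ by $\textsc{Candidates}(T_t)$. *)

theory Defs
  imports Complex_Main
begin

definition distance_space :: "('a \<Rightarrow> 'a \<Rightarrow> real) \<Rightarrow> bool" where
  "distance_space d \<longleftrightarrow> (\<forall>x y. d x y = d y x) \<and> (\<forall>x y. d x y \<ge> 0) \<and> (\<forall>x. d x x = 0)"

text \<open>A clustering of the whole space (the carrier is the universe of type 'a).\<close>
definition is_clustering :: "'a set set \<Rightarrow> bool" where
  "is_clustering \<C> \<longleftrightarrow> (\<forall>C\<in>\<C>. C \<noteq> {}) \<and>
     (\<forall>C\<in>\<C>. \<forall>D\<in>\<C>. C \<noteq> D \<longrightarrow> C \<inter> D = {}) \<and> \<Union>\<C> = UNIV"

definition is_k_clustering :: "nat \<Rightarrow> 'a set set \<Rightarrow> bool" where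
  "is_k_clustering k \<C> \<longleftrightarrow> is_clustering \<C> \<and> finite \<C> \<and> card \<C> = k"

definition same_cluster :: "'a set set \<Rightarrow> 'a \<Rightarrow> 'a \<Rightarrow> bool" where
  "same_cluster \<C> x y \<longleftrightarrow> (\<exists>C\<in>\<C>. x \<in> C \<and> y \<in> C)"

definition nice :: "('a \<Rightarrow> 'a \<Rightarrow> real) \<Rightarrow> 'a set set \<Rightarrow> bool" where
  "nice d \<C> \<longleftrightarrow> (\<forall>x y z. same_cluster \<C> x y \<and> \<not> same_cluster \<C> x z \<longrightarrow> d y x < d z x)"

datatype 'a sltree = Leaf 'a | Node "'a sltree" "'a sltree"

fun leaves :: "'a sltree \<Rightarrow> 'a set" where
  "leaves (Leaf x) = {x}"
| "leaves (Node l r) = leaves l \<union> leaves r"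

definition link :: "('a \<Rightarrow> 'a \<Rightarrow> real) \<Rightarrow> 'a sltree \<Rightarrow> 'a sltree \<Rightarrow> real" where
  "link d A B = Min {d a b | a b. a \<in> leaves A \<and> b \<in> leaves B}"

text \<open>\<open>sl_run d F t\<close>: starting from the forest F of current clusters, single linkage
  (with some tie-breaking) ends in the root tree t.\<close>
inductive sl_run :: "('a \<Rightarrow> 'a \<Rightarrow> real) \<Rightarrow> 'a sltree set \<Rightarrow> 'a sltree \<Rightarrow> bool"
  for d where
  sl_done: "sl_run d {t} t"
| sl_step: "\<lbrakk> A \<in> F; B \<in> F; A \<noteq> B;
             \<forall>A'\<in>F. \<forall>B'\<in>F. A' \<noteq> B' \<longrightarrow> link d A B \<le> link d A' B';
             sl_run d (insert (Node A B) (F - {A, B})) t \<rbrakk> \<Longrightarrow> sl_run d F t"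

definition single_linkage :: "('a \<Rightarrow> 'a \<Rightarrow> real) \<Rightarrow> 'a set \<Rightarrow> 'a sltree \<Rightarrow> bool" where
  "single_linkage d S t \<longleftrightarrow> sl_run d (Leaf ` S) t"

datatype 'a atree = ALeaf 'a | ANode 'a "'a atree" "'a atree"

fun apoint :: "'a atree \<Rightarrow> 'a" where
  "apoint (ALeaf x) = x"
| "apoint (ANode p l r) = p"

fun shape :: "'a atree \<Rightarrow> 'a sltree" where
  "shape (ALeaf x) = Leaf x"
| "shape (ANode p l r) = Node (shape l) (shape r)"

fun valid_assign :: "'a atree \<Rightarrow> bool" where
  "valid_assign (ALeaf x) = True"
| "valid_assign (ANode p l r) \<longleftrightarrow> valid_assign l \<and> valid_assign r \<and> (p = apoint l \<or> p = apoint r)"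

text \<open>Points assigned to nodes at depth < n (root at depth 0).\<close>
fun pts_above :: "nat \<Rightarrow> 'a atree \<Rightarrow> 'a set" where
  "pts_above 0 t = {}"
| "pts_above (Suc n) (ALeaf x) = {x}"
| "pts_above (Suc n) (ANode p l r) = {p} \<union> pts_above n l \<union> pts_above n r"

text \<open>\<open>candidates d k S C\<close>: C is a possible output of Candidates(S) (any tie-breaking,
  any assignment choices).\<close>
definition candidates :: "('a \<Rightarrow> 'a \<Rightarrow> real) \<Rightarrow> nat \<Rightarrow> 'a set \<Rightarrow> 'a set \<Rightarrow> bool" where
  "candidates d k S C \<longleftrightarrow>
     (\<exists>a. single_linkage d S (shape a) \<and> valid_assign a \<and> C = pts_above k a)"

text \<open>\<open>incr_run d k n x T\<close>: T 0, ..., T n is a possible run of the algorithm on the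
  inputs x 1, ..., x n.\<close>
definition incr_run :: "('a \<Rightarrow> 'a \<Rightarrow> real) \<Rightarrow> nat \<Rightarrow> nat \<Rightarrow> (nat \<Rightarrow> 'a) \<Rightarrow> (nat \<Rightarrow> 'a set) \<Rightarrow> bool" where
  "incr_run d k n x T \<longleftrightarrow> T 0 = {} \<and>
     (\<forall>t\<in>{1..n}. let U = insert (x t) (T (t - 1)) in
        (if card U > 2 ^ (k - 1) then candidates d k U (T t) else T t = U))"

end

theory Submission
  imports Defs
begin

lemma leaves_finite: "finite (leaves t)"
  by (induction t) auto

lemma leaves_ne: "leaves t \<noteq> {}"
  by (induction t) auto

lemma link_set: "{d a b | a b. a \<in> leaves A \<and> b \<in> leaves B} = (\<lambda>(a,b). d a b) ` (leaves A \<times> leaves B)"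
  by auto

lemma link_le: "a \<in> leaves A \<Longrightarrow> b \<in> leaves B \<Longrightarrow> link d A B \<le> d a b"
  unfolding link_def link_set
  by (rule Min_le) (auto simp: leaves_finite)

lemma link_attained: "\<exists>a\<in>leaves A. \<exists>b\<in>leaves B. link d A B = d a b"
proof -
  have "link d A B \<in> (\<lambda>(a,b). d a b) ` (leaves A \<times> leaves B)"
    unfolding link_def link_set
    by (rule Min_in) (auto simp: leaves_finite leaves_ne)
  then show ?thesis by auto
qed

lemma link_sym: "(\<forall>x y. d x y = d y x) \<Longrightarrow> link d A B = link d B A"
  unfolding link_def
proof -
  assume s: "\<forall>x y. d x y = d y x"
  have "{d a b | a b. a \<in> leaves A \<and> b \<in> leaves B} = {d a b | a b. a \<in> leaves B \<and> b \<in> leaves A}"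
    using s by blast
  then show "Min {d a b | a b. a \<in> leaves A \<and> b \<in> leaves B} = Min {d a b | a b. a \<in> leaves B \<and> b \<in> leaves A}"
    by simp
qed

lemma cl_ex: "is_clustering \<C> \<Longrightarrow> \<exists>C\<in>\<C>. x \<in> C"
  unfolding is_clustering_def by blast

lemma cl_uniq: "is_clustering \<C> \<Longrightarrow> C \<in> \<C> \<Longrightarrow> D \<in> \<C> \<Longrightarrow> x \<in> C \<Longrightarrow> x \<in> D \<Longrightarrow> C = D"
  unfolding is_clustering_def by blast

definition single :: "'a set set \<Rightarrow> 'a set \<Rightarrow> bool" where
  "single \<C> X \<longleftrightarrow> (\<exists>C\<in>\<C>. X \<subseteq> C)"

definition sat :: "'a set set \<Rightarrow> 'a set \<Rightarrow> 'a set \<Rightarrow> bool" where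
  "sat \<C> S X \<longleftrightarrow> (\<forall>C\<in>\<C>. C \<inter> X \<noteq> {} \<longrightarrow> C \<inter> S \<subseteq> X)"

fun good :: "'a set set \<Rightarrow> 'a set \<Rightarrow> 'a sltree \<Rightarrow> bool" where
  "good \<C> S (Leaf x) = True"
| "good \<C> S (Node l r) = (good \<C> S l \<and> good \<C> S r \<and> leaves l \<inter> leaves r = {} \<and>
     (single \<C> (leaves l \<union> leaves r) \<or> (sat \<C> S (leaves l) \<and> sat \<C> S (leaves r))))"

lemma good_ok: "is_clustering \<C> \<Longrightarrow> good \<C> S t \<Longrightarrow> single \<C> (leaves t) \<or> sat \<C> S (leaves t)"
proof (cases t)
  case (Leaf x)
  assume "is_clustering \<C>"
  then show ?thesis using cl_ex[of \<C> x] Leaf by (auto simp: single_def)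
next
  case (Node l r)
  assume "good \<C> S t"
  then show ?thesis using Node by (auto simp: sat_def)
qed


definition disjF :: "'a sltree set \<Rightarrow> bool" where
  "disjF F \<longleftrightarrow> (\<forall>X\<in>F. \<forall>Y\<in>F. X \<noteq> Y \<longrightarrow> leaves X \<inter> leaves Y = {})"

lemma merge_side:
  assumes cl: "is_clustering \<C>" and nc: "nice d \<C>" and ds: "\<forall>x y. d x y = d y x"
    and AF: "A \<in> F" and BF: "B \<in> F" and AB: "A \<noteq> B"
    and mn: "\<forall>A'\<in>F. A' \<noteq> A \<longrightarrow> link d A B \<le> link d A A'"
    and inv: "\<forall>t\<in>F. good \<C> S t" and dj: "disjF F" and un: "\<Union>(leaves ` F) = S"
    and nsat: "\<not> sat \<C> S (leaves A)"
  shows "single \<C> (leaves A \<union> leaves B)"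
proof -
  have "single \<C> (leaves A)" using good_ok[OF cl] inv AF nsat by blast
  then obtain C where C: "C \<in> \<C>" "leaves A \<subseteq> C" unfolding single_def by blast
  from nsat obtain C' s where C': "C' \<in> \<C>" "C' \<inter> leaves A \<noteq> {}" "s \<in> C'" "s \<in> S" "s \<notin> leaves A"
    unfolding sat_def by blast
  have "C' = C" using C C' cl_uniq[OF cl] by blast
  obtain a b where ab: "a \<in> leaves A" "b \<in> leaves B" "link d A B = d a b"
    using link_attained[of A B d] by blast
  obtain A' where A': "A' \<in> F" "s \<in> leaves A'" using C'(4) un by blast
  have aS: "a \<in> S" using ab AF un by blast
  have bC: "b \<in> C"
  proof (rule ccontr)
    assume nb: "b \<notin> C"
    have sc: "same_cluster \<C> a s" unfolding same_cluster_def using C C' \<open>C' = C\<close> ab by blast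
    have nsc: "\<not> same_cluster \<C> a b" unfolding same_cluster_def
      using C ab nb cl_uniq[OF cl] by blast
    have "d s a < d b a" using nc sc nsc unfolding nice_def by blast
    moreover have "link d A A' \<le> d a s" using link_le[of a A s A' d] ab A' by blast
    moreover have "link d A B \<le> link d A A'" proof -
      have "A' \<noteq> A" using A' C'(5) by auto
      then show ?thesis using mn A'(1) by blast
    qed
    moreover have "d a s = d s a" "d a b = d b a" using ds by blast+
    ultimately show False using ab(3) by linarith
  qed
  have "single \<C> (leaves B) \<or> sat \<C> S (leaves B)" using good_ok[OF cl] inv BF by blast
  then show ?thesis
  proof
    assume "single \<C> (leaves B)"
    then obtain D where D: "D \<in> \<C>" "leaves B \<subseteq> D" unfolding single_def by blast
    then have "D = C" using bC ab C cl_uniq[OF cl] by blast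
    then have "leaves A \<union> leaves B \<subseteq> C" using C D by simp
    then show ?thesis using C(1) unfolding single_def by blast
  next
    assume "sat \<C> S (leaves B)"
    then have "C \<inter> S \<subseteq> leaves B" using C bC ab unfolding sat_def by blast
    moreover have "a \<in> C \<inter> S" using aS ab(1) C(2) by blast
    ultimately have "a \<in> leaves B" by blast
    moreover have "leaves A \<inter> leaves B = {}" using dj AF BF AB unfolding disjF_def by blast
    ultimately show ?thesis using ab(1) by blast
  qed
qed

lemma sl_inv:
  assumes cl: "is_clustering \<C>" and nc: "nice d \<C>" and ds: "\<forall>x y. d x y = d y x"
  shows "sl_run d F t \<Longrightarrow> (\<forall>t\<in>F. good \<C> S t) \<Longrightarrow> disjF F \<Longrightarrow> \<Union>(leaves ` F) = S
     \<Longrightarrow> good \<C> S t \<and> leaves t = S"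
proof (induction rule: sl_run.induct)
  case (sl_done t)
  then show ?case by auto
next
  case (sl_step A F B t)
  have mA: "\<forall>A'\<in>F. A' \<noteq> A \<longrightarrow> link d A B \<le> link d A A'"
  proof (intro ballI impI)
    fix A' assume a: "A' \<in> F" "A' \<noteq> A"
    show "link d A B \<le> link d A A'"
      using sl_step.hyps(4)[rule_format, of A A'] sl_step.hyps(1) a by simp
  qed
  have mB: "\<forall>A'\<in>F. A' \<noteq> B \<longrightarrow> link d B A \<le> link d B A'"
  proof (intro ballI impI)
    fix A' assume "A' \<in> F" "A' \<noteq> B"
    then have "link d A B \<le> link d B A'" using sl_step.hyps(4)[rule_format, of B A'] sl_step.hyps(2) by simp
    then show "link d B A \<le> link d B A'" using link_sym[OF ds, of B A] by simp
  qed
  have m1: "sat \<C> S (leaves A) \<or> single \<C> (leaves A \<union> leaves B)"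
    using merge_side[OF cl nc ds sl_step.hyps(1,2,3) mA sl_step.prems] by blast
  have BA: "B \<noteq> A" using sl_step.hyps(3) by simp
  have m2': "sat \<C> S (leaves B) \<or> single \<C> (leaves B \<union> leaves A)"
    using merge_side[OF cl nc ds sl_step.hyps(2,1) BA mB sl_step.prems] by blast
  have m2: "sat \<C> S (leaves B) \<or> single \<C> (leaves A \<union> leaves B)"
    using m2' by (simp add: Un_commute)
  have dAB: "leaves A \<inter> leaves B = {}" using sl_step.prems(2) sl_step.hyps(1-3) unfolding disjF_def by blast
  have gA: "good \<C> S A" "good \<C> S B" using sl_step.prems(1) sl_step.hyps(1,2) by blast+
  have g: "good \<C> S (Node A B)" using m1 m2 dAB gA by auto
  let ?F = "insert (Node A B) (F - {A, B})"
  have "\<forall>t\<in>?F. good \<C> S t" using g sl_step.prems(1) by auto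
  moreover have "disjF ?F"
    using sl_step.prems(2) sl_step.hyps(1,2) unfolding disjF_def
    by (simp, blast)
  moreover have "\<Union>(leaves ` ?F) = S"
    using sl_step.prems(3) sl_step.hyps(1,2) by auto
  ultimately show ?case using sl_step.IH by blast
qed


lemma apoint_in: "valid_assign a \<Longrightarrow> apoint a \<in> leaves (shape a)"
  by (induction a) auto

lemma pts_basic: "valid_assign a \<Longrightarrow> finite (pts_above n a) \<and> apoint a \<in> pts_above (Suc n) a
   \<and> card (pts_above (Suc n) a) \<le> 2 ^ n"
proof (induction a arbitrary: n)
  case (ALeaf x)
  then show ?case by (cases n) auto
next
  case (ANode p l r)
  have vl: "valid_assign l" "valid_assign r" and pp: "p = apoint l \<or> p = apoint r" using ANode.prems by auto
  have fin: "finite (pts_above n (ANode p l r))"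
    using ANode.IH vl by (cases n) auto
  have card: "card (pts_above (Suc n) (ANode p l r)) \<le> 2 ^ n"
  proof (cases n)
    case 0 then show ?thesis by simp
  next
    case (Suc m)
    have e: "pts_above (Suc n) (ANode p l r) = pts_above (Suc m) l \<union> pts_above (Suc m) r"
      using Suc pp ANode.IH(1)[OF vl(1), of m] ANode.IH(2)[OF vl(2), of m] by auto
    have "card (pts_above (Suc m) l \<union> pts_above (Suc m) r) \<le> card (pts_above (Suc m) l) + card (pts_above (Suc m) r)"
      by (rule card_Un_le)
    also have "\<dots> \<le> 2 ^ m + 2 ^ m"
      using ANode.IH(1)[OF vl(1), of m] ANode.IH(2)[OF vl(2), of m] by linarith
    finally show ?thesis using e Suc by simp
  qed
  show ?case using fin card by simp
qed

definition ncl :: "'a set set \<Rightarrow> 'a set \<Rightarrow> 'a set set" where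
  "ncl \<C> X = {D\<in>\<C>. D \<inter> X \<noteq> {}}"

lemma ncl_ne: "is_clustering \<C> \<Longrightarrow> X \<noteq> {} \<Longrightarrow> ncl \<C> X \<noteq> {}"
proof -
  assume cl: "is_clustering \<C>" and ne: "X \<noteq> {}"
  then obtain y where y: "y \<in> X" by blast
  obtain C where "C \<in> \<C>" "y \<in> C" using cl_ex[OF cl, of y] by blast
  then have "C \<in> ncl \<C> X" using y unfolding ncl_def by blast
  then show ?thesis by blast
qed

lemma cover:
  assumes cl: "is_clustering \<C>" and fC: "finite \<C>"
  shows "valid_assign a \<Longrightarrow> good \<C> S (shape a) \<Longrightarrow> leaves (shape a) \<subseteq> S \<Longrightarrow> C \<in> \<C>
    \<Longrightarrow> C \<inter> leaves (shape a) \<noteq> {} \<Longrightarrow> card (ncl \<C> (leaves (shape a))) \<le> Suc j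
    \<Longrightarrow> pts_above (Suc j) a \<inter> C \<noteq> {}"
proof (induction a arbitrary: j)
  case (ALeaf x)
  then show ?case by auto
next
  case (ANode p l r)
  let ?L = "leaves (shape l)" and ?R = "leaves (shape r)"
  have vl: "valid_assign l" "valid_assign r" and pp: "p = apoint l \<or> p = apoint r" using ANode.prems(1) by auto
  have g: "good \<C> S (shape l)" "good \<C> S (shape r)" "?L \<inter> ?R = {}"
    and alt: "single \<C> (?L \<union> ?R) \<or> (sat \<C> S ?L \<and> sat \<C> S ?R)"
    using ANode.prems(2) by auto
  have LS: "?L \<subseteq> S" "?R \<subseteq> S" using ANode.prems(3) by auto
  have pin: "p \<in> ?L \<union> ?R" using pp apoint_in vl by auto
  from alt show ?case
  proof
    assume "single \<C> (?L \<union> ?R)"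
    then obtain C' where C': "C' \<in> \<C>" "?L \<union> ?R \<subseteq> C'" unfolding single_def by blast
    have "C \<inter> (?L \<union> ?R) \<noteq> {}" using ANode.prems(5) by simp
    then have "C = C'" using C' ANode.prems(4) cl_uniq[OF cl] by blast
    then have "p \<in> C" using pin C' by blast
    then show ?thesis by simp
  next
    assume sat: "sat \<C> S ?L \<and> sat \<C> S ?R"
    have un: "ncl \<C> (leaves (shape (ANode p l r))) = ncl \<C> ?L \<union> ncl \<C> ?R"
      unfolding ncl_def by auto
    have dj: "ncl \<C> ?L \<inter> ncl \<C> ?R = {}"
    proof (rule ccontr)
      assume "ncl \<C> ?L \<inter> ncl \<C> ?R \<noteq> {}"
      then obtain D where D: "D \<in> \<C>" "D \<inter> ?L \<noteq> {}" "D \<inter> ?R \<noteq> {}" unfolding ncl_def by blast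
      then obtain y where y: "y \<in> D" "y \<in> ?R" by blast
      have "D \<inter> S \<subseteq> ?L" using sat D unfolding sat_def by blast
      then have "y \<in> ?L" using y LS by blast
      then show False using y g(3) by blast
    qed
    have fin: "finite (ncl \<C> ?L)" "finite (ncl \<C> ?R)" using fC unfolding ncl_def by simp_all
    have ne: "ncl \<C> ?L \<noteq> {}" "ncl \<C> ?R \<noteq> {}" using ncl_ne[OF cl leaves_ne[of "shape l"]] ncl_ne[OF cl leaves_ne[of "shape r"]] by simp_all
    have c: "card (ncl \<C> ?L) + card (ncl \<C> ?R) \<le> Suc j"
      using ANode.prems(6) un card_Un_disjoint[OF fin dj] by simp
    have c1: "card (ncl \<C> ?L) \<ge> 1" "card (ncl \<C> ?R) \<ge> 1"
      using fin ne by (simp_all add: Suc_le_eq card_gt_0_iff)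
    obtain j' where j': "j = Suc j'" using c c1 by (cases j) auto
    have cl': "card (ncl \<C> ?L) \<le> Suc j'" "card (ncl \<C> ?R) \<le> Suc j'" using c c1 j' by linarith+
    have "C \<inter> ?L \<noteq> {} \<or> C \<inter> ?R \<noteq> {}" using ANode.prems(5) by auto
    then show ?thesis
    proof
      assume "C \<inter> ?L \<noteq> {}"
      then have "pts_above (Suc j') l \<inter> C \<noteq> {}"
        using ANode.IH(1)[OF vl(1) g(1) LS(1) ANode.prems(4) _ cl'(1)] by blast
      then show ?thesis using j' by auto
    next
      assume "C \<inter> ?R \<noteq> {}"
      then have "pts_above (Suc j') r \<inter> C \<noteq> {}"
        using ANode.IH(2)[OF vl(2) g(2) LS(2) ANode.prems(4) _ cl'(2)] by blast
      then show ?thesis using j' by auto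
    qed
  qed
qed


theorem mainTheorem8:
  fixes d :: "'a \<Rightarrow> 'a \<Rightarrow> real" and k n :: nat and \<C> :: "'a set set"
    and x :: "nat \<Rightarrow> 'a" and T :: "nat \<Rightarrow> 'a set"
  assumes "distance_space d"
    and "k > 0"
    and "is_k_clustering k \<C>"
    and "nice d \<C>"
    and "inj_on x {1..n}"
    and "incr_run d k n x T"
  shows "\<forall>t \<le> n. card (T t) \<le> 2 ^ (k - 1) \<and>
           (\<forall>C\<in>\<C>. C \<inter> x ` {1..t} \<noteq> {} \<longrightarrow> T t \<inter> C \<noteq> {})"
proof -
  have ds: "\<forall>x y. d x y = d y x" using assms(1) unfolding distance_space_def by blast
  have cl: "is_clustering \<C>" and fC: "finite \<C>" and cC: "card \<C> = k"
    using assms(3) unfolding is_k_clustering_def by auto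
  have nc: "nice d \<C>" by fact
  have kk: "k = Suc (k - 1)" using assms(2) by simp
  have T0: "T 0 = {}" using assms(6) unfolding incr_run_def by blast
  have Tstep: "\<And>t. t \<in> {1..n} \<Longrightarrow> (if card (insert (x t) (T (t - 1))) > 2 ^ (k - 1)
        then candidates d k (insert (x t) (T (t - 1))) (T t) else T t = insert (x t) (T (t - 1)))"
    using assms(6) unfolding incr_run_def Let_def by blast
  have key: "t \<le> n \<longrightarrow> finite (T t) \<and> card (T t) \<le> 2 ^ (k - 1) \<and>
           (\<forall>C\<in>\<C>. C \<inter> x ` {1..t} \<noteq> {} \<longrightarrow> T t \<inter> C \<noteq> {})" for t
  proof (induction t)
    case 0
    then show ?case using T0 by simp
  next
    case (Suc t)
    show ?case
    proof
      assume le: "Suc t \<le> n"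
      then have IH: "finite (T t)" "card (T t) \<le> 2 ^ (k - 1)"
        "\<forall>C\<in>\<C>. C \<inter> x ` {1..t} \<noteq> {} \<longrightarrow> T t \<inter> C \<noteq> {}" using Suc.IH by auto
      define U where "U = insert (x (Suc t)) (T t)"
      have fU: "finite U" using IH(1) U_def by simp
      have img: "x ` {1..Suc t} = insert (x (Suc t)) (x ` {1..t})"
        by (auto simp: atLeastAtMostSuc_conv)
      have covU: "\<forall>C\<in>\<C>. C \<inter> x ` {1..Suc t} \<noteq> {} \<longrightarrow> U \<inter> C \<noteq> {}"
        using IH(3) unfolding img U_def by blast
      have st: "if card U > 2 ^ (k - 1) then candidates d k U (T (Suc t)) else T (Suc t) = U"
      proof -
        have "Suc t \<in> {1..n}" using le by simp
        from Tstep[OF this] show ?thesis unfolding U_def diff_Suc_1 .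
      qed
      show "finite (T (Suc t)) \<and> card (T (Suc t)) \<le> 2 ^ (k - 1) \<and>
           (\<forall>C\<in>\<C>. C \<inter> x ` {1..Suc t} \<noteq> {} \<longrightarrow> T (Suc t) \<inter> C \<noteq> {})"
      proof (cases "card U > 2 ^ (k - 1)")
        case False
        then show ?thesis using st fU covU by simp
      next
        case True
        then have "candidates d k U (T (Suc t))" using st by simp
        then obtain a where a: "single_linkage d U (shape a)" "valid_assign a"
          "T (Suc t) = pts_above k a" unfolding candidates_def by blast
        have i1: "\<forall>s\<in>Leaf ` U. good \<C> U s" by auto
        have i2: "disjF (Leaf ` U)" unfolding disjF_def by auto
        have i3: "\<Union>(leaves ` Leaf ` U) = U" by auto
        have gl: "good \<C> U (shape a) \<and> leaves (shape a) = U"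
          using sl_inv[OF cl nc ds, of "Leaf ` U" "shape a" U] a(1) i1 i2 i3
          unfolding single_linkage_def by blast
        have pb: "finite (pts_above k a)" "card (pts_above (Suc (k - 1)) a) \<le> 2 ^ (k - 1)"
          using pts_basic[OF a(2), of k] pts_basic[OF a(2), of "k - 1"] by auto
        have cn: "card (ncl \<C> (leaves (shape a))) \<le> Suc (k - 1)"
        proof -
          have "card (ncl \<C> (leaves (shape a))) \<le> card \<C>"
            by (rule card_mono[OF fC]) (auto simp: ncl_def)
          then show ?thesis using cC kk by simp
        qed
        have cov: "\<forall>C\<in>\<C>. C \<inter> x ` {1..Suc t} \<noteq> {} \<longrightarrow> T (Suc t) \<inter> C \<noteq> {}"
        proof (intro ballI impI)
          fix C assume C: "C \<in> \<C>" "C \<inter> x ` {1..Suc t} \<noteq> {}"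
          then have "U \<inter> C \<noteq> {}" using covU by blast
          then have "C \<inter> leaves (shape a) \<noteq> {}" using gl by blast
          then have "pts_above (Suc (k - 1)) a \<inter> C \<noteq> {}"
            using cover[OF cl fC a(2), of U C "k - 1"] gl C(1) cn by simp
          then show "T (Suc t) \<inter> C \<noteq> {}" using a(3) kk by simp
        qed
        show ?thesis using pb cov a(3) kk by simp
      qed
    qed
  qed
  show ?thesis using key by blast
qed

end
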